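(* In the setting described in the context, $A^3A^*-[3]_qA^2A^*A+[3]_qAA^*A^2-A^*A^3=0$, $A^{*3}A-[3]_qA^{*2}AA^*+[3]_qA^*AA^{*2}-AA^{*3}=0$, $B^3B^*-[3]_qB^2B^*B+[3]_qBB^*B^2-B^*B^3=0$, $B^{*3}B-[3]_qB^{*2}BB^*+[3]_qB^*BB^{*2}-BB^{*3}=0$.
   Context: $\mathbb K$ is an algebraically closed field, $q\in\mathbb K$ nonzero and not a root of unity, $[3]_q=\frac{q^3-q^{-3}}{q-q^{-1}}$, $V$ a nonzero finite-dimensional $\mathbb K$-vector space. A tridiagonal pair on $V$ is an ordered pair $A,A^*$ of linear maps $V\to V$ such that: (i) each of $A,A^*$ is diagonalizable; (ii) there is an ordering $V_0,\dots,V_d$ of the eigenspaces of $A$ with $A^*V_i\subseteq V_{i-1}+V_i+V_{i+1}$ ($V_{-1}=V_{d+1}=0$); (iii) there is an ordering $V^*_0,\dots,V^*_\delta$ of the eigenspaces of $A^*$ with $AV^*_i\subseteq V^*_{i-1}+V^*_i+V^*_{i+1}$ ($V^*_{-1}=V^*_{\delta+1}=0$); (iv) no subspace $W\ne0,V$ satisfies $AW\subseteq W$, $A^*W\subseteq W$. It is known $d=\delta$; orderings as in (ii),(iii) are called standard. Setting: $A,A^*$ is a tridiagonal pair on $V$; $V_0,\dots,V_d$ (resp. $V^*_0,\dots,V^*_d$) is a standard ordering of the eigenspaces of $A$ (resp. $A^*$); the eigenvalue of $A$ on $V_i$ is $aq^{2i-d}$ and that of $A^*$ on $V^*_i$ is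 $a^*q^{d-2i}$ for some nonzero $a,a^*\in\mathbb K$; $b,b^*\in\mathbb K$ are nonzero. For $0\le i\le d$ the subspaces $(V^*_0+\cdots+V^*_i)\cap(V_0+\cdots+V_{d-i})$ form a decomposition of $V$ (nonzero, direct sum equal to $V$), as do the subspaces $(V^*_{d-i}+\cdots+V^*_d)\cap(V_i+\cdots+V_d)$. $B$ is the linear map acting as $bq^{2i-d}I$ on $(V^*_0+\cdots+V^*_i)\cap(V_0+\cdots+V_{d-i})$, and $B^*$ is the linear map acting as $b^*q^{d-2i}I$ on $(V^*_{d-i}+\cdots+V^*_d)\cap(V_i+\cdots+V_d)$, for each $i$. *)

theory Defs
  imports Main "HOL-Computational_Algebra.Polynomial"
begin

text \<open>Vector spaces are modelled abstractly: the whole type 'v is the space V,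
  with scalar multiplication s :: 'a \<Rightarrow> 'v \<Rightarrow> 'v over the field 'a.\<close>

definition alg_closed :: "'a::field itself \<Rightarrow> bool" where
  "alg_closed _ \<longleftrightarrow> (\<forall>p :: 'a poly. 0 < degree p \<longrightarrow> (\<exists>x. poly p x = 0))"

definition qint3 :: "'a::field \<Rightarrow> 'a" where
  "qint3 q = (q ^ 3 - inverse q ^ 3) / (q - inverse q)"

definition ssum :: "(nat \<Rightarrow> 'v::ab_group_add set) \<Rightarrow> nat set \<Rightarrow> 'v set" where
  "ssum W I = {\<Sum>i\<in>I. f i | f. \<forall>i\<in>I. f i \<in> W i}"

definition eigenspace :: "('a \<Rightarrow> 'v::ab_group_add \<Rightarrow> 'v) \<Rightarrow> ('v \<Rightarrow> 'v) \<Rightarrow> 'a \<Rightarrow> 'v set" where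
  "eigenspace s A \<theta> = {v. A v = s \<theta> v}"

definition is_eigenvalue :: "('a \<Rightarrow> 'v::ab_group_add \<Rightarrow> 'v) \<Rightarrow> ('v \<Rightarrow> 'v) \<Rightarrow> 'a \<Rightarrow> bool" where
  "is_eigenvalue s A \<theta> \<longleftrightarrow> (\<exists>v. v \<noteq> 0 \<and> A v = s \<theta> v)"

definition diagonalizable :: "('a::field \<Rightarrow> 'v::ab_group_add \<Rightarrow> 'v) \<Rightarrow> ('v \<Rightarrow> 'v) \<Rightarrow> bool" where
  "diagonalizable s A \<longleftrightarrow> module.span s {v. \<exists>\<theta>. A v = s \<theta> v} = UNIV"

text \<open>th 0, ..., th d is an ordering of the (distinct) eigenvalues of A, with
  eigenspaces V_i = eigenspace s A (th i), such that
  As V_i \<subseteq> V_(i-1) + V_i + V_(i+1) (with V_(-1) = V_(d+1) = 0).\<close>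
definition standard_ordering ::
  "('a::field \<Rightarrow> 'v::ab_group_add \<Rightarrow> 'v) \<Rightarrow> ('v \<Rightarrow> 'v) \<Rightarrow> ('v \<Rightarrow> 'v) \<Rightarrow> nat \<Rightarrow> (nat \<Rightarrow> 'a) \<Rightarrow> bool" where
  "standard_ordering s A As d th \<longleftrightarrow>
     inj_on th {..d} \<and> {\<theta>. is_eigenvalue s A \<theta>} = th ` {..d} \<and>
     (\<forall>i\<le>d. \<forall>v\<in>eigenspace s A (th i).
        As v \<in> ssum (\<lambda>j. eigenspace s A (th j)) {j. j \<le> d \<and> i \<le> j + 1 \<and> j \<le> i + 1})"

definition tridiagonal_pair ::
  "('a::field \<Rightarrow> 'v::ab_group_add \<Rightarrow> 'v) \<Rightarrow> ('v \<Rightarrow> 'v) \<Rightarrow> ('v \<Rightarrow> 'v) \<Rightarrow> bool" where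
  "tridiagonal_pair s A As \<longleftrightarrow>
     Vector_Spaces.linear s s A \<and> Vector_Spaces.linear s s As \<and>
     diagonalizable s A \<and> diagonalizable s As \<and>
     (\<exists>d th. standard_ordering s A As d th) \<and>
     (\<exists>\<delta> th. standard_ordering s As A \<delta> th) \<and>
     (\<forall>W. module.subspace s W \<and> A ` W \<subseteq> W \<and> As ` W \<subseteq> W \<longrightarrow> W = {0} \<or> W = UNIV)"

definition decomposition ::
  "('a::field \<Rightarrow> 'v::ab_group_add \<Rightarrow> 'v) \<Rightarrow> (nat \<Rightarrow> 'v set) \<Rightarrow> nat \<Rightarrow> bool" where
  "decomposition s W d \<longleftrightarrow>
     (\<forall>i\<le>d. module.subspace s (W i) \<and> W i \<noteq> {0}) \<and>
     ssum W {..d} = UNIV \<and>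
     (\<forall>f. (\<forall>i\<le>d. f i \<in> W i) \<and> (\<Sum>i\<le>d. f i) = 0 \<longrightarrow> (\<forall>i\<le>d. f i = 0))"

end

theory Submission
  imports Defs
begin


lemma qpow_inj:
  fixes q :: "'a::field"
  assumes q0: "q \<noteq> 0" and qroot: "\<forall>n::nat. 0 < n \<longrightarrow> q ^ n \<noteq> 1"
    and h: "q powi k = q powi l"
  shows "k = l"
proof (rule ccontr)
  assume ne: "k \<noteq> l"
  have h1: "q powi (k - l) = 1" using h q0 by (simp add: power_int_diff)
  show False
  proof (cases "k - l \<ge> 0")
    case True
    then have "q ^ nat (k - l) = 1" using h1 by (simp add: power_int_def)
    moreover have "0 < nat (k - l)" using True ne by simp
    ultimately show False using qroot by blast
  next
    case False
    then have "inverse q ^ nat (l - k) = 1" using h1 by (simp add: power_int_def)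
    then have "q ^ nat (l - k) = 1" by (simp add: power_inverse)
    moreover have "0 < nat (l - k)" using False ne by simp
    ultimately show False using qroot by blast
  qed
qed

lemma qpow_add2:
  fixes q :: "'a::field"
  assumes q0: "q \<noteq> 0"
  shows "q powi (k + 2) = q^2 * q powi k"
  using q0 by (simp add: power_int_add)

lemma qint3_eq:
  fixes q :: "'a::field"
  assumes q0: "q \<noteq> 0" and q2: "q^2 \<noteq> 1"
  shows "qint3 q = q^2 + 1 + inverse q ^ 2"
proof -
  have d: "q - inverse q \<noteq> 0"
  proof
    assume "q - inverse q = 0"
    then have "q * q = q * inverse q" by simp
    then have "q^2 = 1" using q0 by (simp add: power2_eq_square)
    with q2 show False by simp
  qed
  have "q ^ 3 - inverse q ^ 3 = (q - inverse q) * (q^2 + 1 + inverse q ^ 2)"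
    using q0 by (simp add: field_simps power2_eq_square power3_eq_cube)
  then show ?thesis unfolding qint3_def using d by simp
qed

lemma ord_tri:
  assumes "standard_ordering sc M T d th" "i \<le> d" "v \<in> eigenspace sc M (th i)"
  shows "T v \<in> ssum (\<lambda>j. eigenspace sc M (th j)) {j. j \<le> d \<and> i \<le> j + 1 \<and> j \<le> i + 1}"
  using assms unfolding standard_ordering_def by (elim conjE) (drule spec[of _ i], simp)

lemma ord_eig:
  assumes "standard_ordering sc M T d th" "is_eigenvalue sc M \<mu>"
  shows "\<exists>i\<le>d. \<mu> = th i"
proof -
  have "\<mu> \<in> {\<theta>. is_eigenvalue sc M \<theta>}" using assms(2) by simp
  moreover have "{\<theta>. is_eigenvalue sc M \<theta>} = th ` {..d}"
    using assms(1) unfolding standard_ordering_def by (elim conjE) assumption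
  ultimately show ?thesis by auto
qed

definition serre_op :: "('a::field \<Rightarrow> 'v::ab_group_add \<Rightarrow> 'v) \<Rightarrow> 'a \<Rightarrow> ('v \<Rightarrow> 'v) \<Rightarrow> ('v \<Rightarrow> 'v) \<Rightarrow> 'v \<Rightarrow> 'v" where
  "serre_op sc k T M v = T (T (T (M v))) - sc k (T (T (M (T v)))) + sc k (T (M (T (T v)))) - M (T (T (T v)))"

context vector_space begin

lemma lin_add: "Vector_Spaces.linear scale scale f \<Longrightarrow> f (x + y) = f x + f y"
  by (metis module_hom.add module_hom_iff_linear)
lemma lin_scale: "Vector_Spaces.linear scale scale f \<Longrightarrow> f (c *s x) = c *s f x"
  by (metis module_hom.scale module_hom_iff_linear)
lemma lin_zero: "Vector_Spaces.linear scale scale f \<Longrightarrow> f 0 = 0"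
  using lin_scale[of f 0 0] by simp
lemma lin_diff: "Vector_Spaces.linear scale scale f \<Longrightarrow> f (x - y) = f x - f y"
  by (metis module_hom.diff module_hom_iff_linear)
lemma lin_sum: "Vector_Spaces.linear scale scale f \<Longrightarrow> f (sum g S) = (\<Sum>a\<in>S. f (g a))"
  by (metis module_hom.sum module_hom_iff_linear)

lemma eig_subspace: "Vector_Spaces.linear scale scale A \<Longrightarrow> subspace (eigenspace scale A \<theta>)"
  unfolding subspace_def eigenspace_def
  by (auto simp: lin_add lin_scale lin_zero scale_right_distrib scale_left_commute)

lemma ssum_iff: "x \<in> ssum W I \<longleftrightarrow> (\<exists>f. x = (\<Sum>i\<in>I. f i) \<and> (\<forall>i\<in>I. f i \<in> W i))"
  by (auto simp: ssum_def)

lemma ssum_subspace: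
  assumes W: "\<And>i. i \<in> I \<Longrightarrow> subspace (W i)"
  shows "subspace (ssum W I)"
  unfolding subspace_def
proof (intro conjI ballI allI)
  show "0 \<in> ssum W I" unfolding ssum_iff
    by (rule exI[of _ "\<lambda>_. 0"]) (auto simp: subspace_0 W)
next
  fix x y assume "x \<in> ssum W I" "y \<in> ssum W I"
  then obtain f g where f: "x = (\<Sum>i\<in>I. f i)" "\<forall>i\<in>I. f i \<in> W i"
    and g: "y = (\<Sum>i\<in>I. g i)" "\<forall>i\<in>I. g i \<in> W i" unfolding ssum_iff by blast
  show "x + y \<in> ssum W I" unfolding ssum_iff
    by (rule exI[of _ "\<lambda>i. f i + g i"]) (auto simp: f g sum.distrib subspace_add W)
next
  fix c x assume "x \<in> ssum W I"
  then obtain f where f: "x = (\<Sum>i\<in>I. f i)" "\<forall>i\<in>I. f i \<in> W i" unfolding ssum_iff by blast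
  show "c *s x \<in> ssum W I" unfolding ssum_iff
    by (rule exI[of _ "\<lambda>i. c *s f i"]) (auto simp: f scale_sum_right subspace_scale W)
qed

lemma ssum_mem:
  assumes "finite I" "i \<in> I" "\<And>j. j \<in> I \<Longrightarrow> 0 \<in> W j" "x \<in> W i"
  shows "x \<in> ssum W I"
  unfolding ssum_iff
  by (rule exI[of _ "\<lambda>j. if j = i then x else 0"]) (use assms in \<open>auto simp: sum.delta\<close>)

lemma ssum_mono:
  assumes "finite J" "I \<subseteq> J" "\<And>j. j \<in> J \<Longrightarrow> 0 \<in> W j" "x \<in> ssum W I"
  shows "x \<in> ssum W J"
proof -
  obtain f where f: "x = (\<Sum>i\<in>I. f i)" "\<forall>i\<in>I. f i \<in> W i" using assms(4) unfolding ssum_iff by blast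
  have "(\<Sum>j\<in>J. if j \<in> I then f j else 0) = (\<Sum>j\<in>J \<inter> I. f j)"
    using assms(1) by (simp add: sum.inter_restrict)
  also have "J \<inter> I = I" using assms(2) by blast
  finally show ?thesis unfolding ssum_iff
    by (intro exI[of _ "\<lambda>j. if j \<in> I then f j else 0"]) (use f assms in auto)
qed

lemma ssum_empty: "ssum W {} = {0}"
  by (auto simp: ssum_def)

lemma ssum_map:
  assumes T: "Vector_Spaces.linear scale scale T" and S: "subspace S"
    and h: "\<And>i y. i \<in> I \<Longrightarrow> y \<in> W i \<Longrightarrow> T y \<in> S" and x: "x \<in> ssum W I"
  shows "T x \<in> S"
proof -
  obtain f where f: "x = (\<Sum>i\<in>I. f i)" "\<forall>i\<in>I. f i \<in> W i" using x unfolding ssum_iff by blast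
  have "T x = (\<Sum>i\<in>I. T (f i))" using f lin_sum[OF T] by simp
  also have "\<dots> \<in> S" by (rule subspace_sum[OF S]) (use f h in auto)
  finally show ?thesis .
qed

lemma ssum_in:
  assumes S: "subspace S" and h: "\<And>i y. i \<in> I \<Longrightarrow> y \<in> W i \<Longrightarrow> y \<in> S" and x: "x \<in> ssum W I"
  shows "x \<in> S"
  using ssum_map[of id S I W x] S h x by (simp add: linear_id)

lemma tri_low:
  assumes M: "Vector_Spaces.linear scale scale M"
    and x: "x \<in> ssum (\<lambda>j. eigenspace scale M (th j)) I" and I: "finite I" "m \<in> I"
  shows "M x - th m *s x \<in> ssum (\<lambda>j. eigenspace scale M (th j)) (I - {m})"
proof -
  obtain f where f: "x = (\<Sum>i\<in>I. f i)" "\<forall>i\<in>I. f i \<in> eigenspace scale M (th i)"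
    using x unfolding ssum_iff by blast
  define g where "g j = (th j - th m) *s f j" for j
  have "M x - th m *s x = (\<Sum>j\<in>I. M (f j) - th m *s f j)"
    by (simp add: f lin_sum[OF M] scale_sum_right sum_subtractf)
  also have "\<dots> = (\<Sum>j\<in>I. g j)"
    using f(2) by (intro sum.cong) (auto simp: g_def eigenspace_def scale_left_diff_distrib)
  also have "\<dots> = g m + (\<Sum>j\<in>I - {m}. g j)" using I by (simp add: sum.remove)
  also have "g m = 0" by (simp add: g_def)
  finally have e: "M x - th m *s x = (\<Sum>j\<in>I - {m}. g j)" by simp
  show ?thesis unfolding ssum_iff
    by (rule exI[of _ g]) (use e f(2) eig_subspace[OF M] in \<open>auto simp: g_def subspace_scale\<close>)
qed


lemma shift:
  assumes T: "Vector_Spaces.linear scale scale T" and M: "Vector_Spaces.linear scale scale M"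
    and rel: "\<forall>v. \<alpha> *s T (M v) - \<beta> *s M (T v) = \<gamma> *s v"
    and b0: "\<beta> \<noteq> 0" and mu: "\<alpha> * \<mu> = \<beta> * \<mu>'" "\<mu> \<noteq> \<mu>'" and v: "M v = \<mu> *s v"
  shows "\<exists>x z. T v = x + z \<and> M x = \<mu>' *s x \<and> M z = \<mu> *s z"
proof -
  define c where "c = \<gamma> / (\<beta> * (\<mu>' - \<mu>))"
  define z where "z = c *s v"
  define x where "x = T v - z"
  have r: "\<alpha> *s T (M v) - \<beta> *s M (T v) = \<gamma> *s v" using rel by blast
  have "\<beta> *s M (T v) = (\<alpha> * \<mu>) *s T v - \<gamma> *s v"
    using r by (simp add: v lin_scale[OF T] algebra_simps)
  then have "inverse \<beta> *s (\<beta> *s M (T v)) = inverse \<beta> *s ((\<beta> * \<mu>') *s T v - \<gamma> *s v)"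
    by (simp add: mu)
  then have MT: "M (T v) = \<mu>' *s T v - (\<gamma> / \<beta>) *s v"
    using b0 by (simp add: scale_right_diff_distrib divide_inverse mult.commute)
  have Mz: "M z = \<mu> *s z" by (simp add: z_def lin_scale[OF M] v scale_left_commute)
  have cc: "\<gamma> / \<beta> + \<mu> * c = \<mu>' * c"
    using b0 mu(2) by (simp add: c_def field_simps)
  have "M x = \<mu>' *s T v - ((\<gamma> / \<beta>) *s v + (\<mu> * c) *s v)"
    by (simp add: x_def lin_diff[OF M] MT z_def lin_scale[OF M] v algebra_simps)
  also have "(\<gamma> / \<beta>) *s v + (\<mu> * c) *s v = (\<mu>' * c) *s v"
    by (simp add: cc flip: scale_left_distrib)
  finally have "M x = \<mu>' *s x" by (simp add: x_def z_def scale_right_diff_distrib)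
  then show ?thesis using Mz by (intro exI[of _ x] exI[of _ z]) (simp add: x_def)
qed

lemma inv_comp:
  assumes T: "Vector_Spaces.linear scale scale T" and W: "subspace W" and TW: "\<And>x. x \<in> W \<Longrightarrow> T x \<in> W"
    and S: "finite S"
  shows "inj_on t S \<Longrightarrow> (\<forall>j\<in>S. T (w j) = t j *s w j) \<Longrightarrow> (\<Sum>j\<in>S. w j) \<in> W \<Longrightarrow> (\<forall>j\<in>S. w j \<in> W)"
  using S
proof (induction S arbitrary: w rule: finite_induct)
  case empty
  then show ?case by simp
next
  case (insert m F)
  define w' where "w' j = (t j - t m) *s w j" for j
  have inF: "inj_on t F" using insert.prems(1) by (simp add: inj_on_insert)
  have tne: "\<And>j. j \<in> F \<Longrightarrow> t j \<noteq> t m" using insert.prems(1) insert.hyps(2) by (auto simp: inj_on_def)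
  have v: "(\<Sum>j\<in>insert m F. w j) = w m + (\<Sum>j\<in>F. w j)" using insert.hyps by simp
  have "T (\<Sum>j\<in>insert m F. w j) - t m *s (\<Sum>j\<in>insert m F. w j) = (\<Sum>j\<in>F. w' j)"
    using insert.prems(2)
    by (simp add: v lin_add[OF T] lin_sum[OF T] scale_sum_right w'_def scale_left_diff_distrib
        sum_subtractf algebra_simps)
  moreover have "T (\<Sum>j\<in>insert m F. w j) - t m *s (\<Sum>j\<in>insert m F. w j) \<in> W"
    using insert.prems(3) TW W by (simp add: subspace_diff subspace_scale)
  ultimately have "(\<Sum>j\<in>F. w' j) \<in> W" by simp
  moreover have "\<forall>j\<in>F. T (w' j) = t j *s w' j"
    using insert.prems(2) by (simp add: w'_def lin_scale[OF T] scale_left_commute)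
  ultimately have w'W: "\<forall>j\<in>F. w' j \<in> W" using insert.IH[OF inF] by blast
  have wF: "\<forall>j\<in>F. w j \<in> W"
  proof
    fix j assume j: "j \<in> F"
    have "w j = inverse (t j - t m) *s w' j" using tne[OF j] by (simp add: w'_def)
    then show "w j \<in> W" using w'W j W by (simp add: subspace_scale)
  qed
  have "w m = (\<Sum>j\<in>insert m F. w j) - (\<Sum>j\<in>F. w j)" using v by simp
  also have "\<dots> \<in> W" by (rule subspace_diff[OF W insert.prems(3) subspace_sum[OF W]]) (use wF in auto)
  finally show ?case using wF by simp
qed

lemma serre_core:
  fixes q :: 'a
  assumes T: "Vector_Spaces.linear scale scale T" and M: "Vector_Spaces.linear scale scale M"
    and q0: "q \<noteq> 0" and k: "k = q^2 + 1 + inverse q ^ 2"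
    and Tv: "T v = \<theta> *s v" and Mv: "M v = (\<Sum>j\<in>L. w j)"
    and w: "\<forall>j\<in>L. T (w j) = \<tau> j *s w j \<and> (w j = 0 \<or> \<tau> j = \<theta> \<or> \<tau> j = q^2 * \<theta> \<or> \<theta> = q^2 * \<tau> j)"
  shows "T (T (T (M v))) - k *s T (T (M (T v))) + k *s T (M (T (T v))) - M (T (T (T v))) = 0"
proof -
  define g where "g x = T (T (T x)) - (k * \<theta>) *s T (T x) + (k * \<theta>^2) *s T x - (\<theta>^3) *s x" for x
  have gadd: "g (x + y) = g x + g y" for x y
    by (simp add: g_def lin_add[OF T] scale_right_distrib algebra_simps)
  have gsc: "g (c *s x) = c *s g x" for c x
    by (simp add: g_def lin_scale[OF T] scale_right_diff_distrib scale_right_distrib mult.commute mult.left_commute)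
  have g0: "g 0 = 0" by (simp add: g_def lin_zero[OF T])
  have gs: "subspace {x. g x = 0}"
    unfolding subspace_def using gadd gsc g0 by auto
  have lhs: "T (T (T (M v))) - k *s T (T (M (T v))) + k *s T (M (T (T v))) - M (T (T (T v))) = g (M v)"
    by (simp add: g_def Tv lin_scale[OF T] lin_scale[OF M] power2_eq_square power3_eq_cube
        scale_left_commute mult.assoc)
  have "g (w j) = 0" if j: "j \<in> L" for j
  proof -
    have Tw: "T (w j) = \<tau> j *s w j" using w j by blast
    have "g (w j) = (\<tau> j ^ 3 - k * \<theta> * \<tau> j ^ 2 + k * \<theta>^2 * \<tau> j - \<theta>^3) *s w j"
      by (simp add: g_def Tw lin_scale[OF T] power2_eq_square power3_eq_cube algebra_simps)
    also have "\<tau> j ^ 3 - k * \<theta> * \<tau> j ^ 2 + k * \<theta>^2 * \<tau> j - \<theta>^3 = 0 \<or> w j = 0"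
      using w j q0 unfolding k by (auto simp: field_simps power2_eq_square power3_eq_cube)
    then show ?thesis using calculation by auto
  qed
  then have "g (\<Sum>j\<in>L. w j) = 0" using subspace_sum[OF gs, of L w] by auto
  then show ?thesis using lhs Mv by simp
qed


lemma rel_from_decomp:
  assumes T: "Vector_Spaces.linear scale scale T" and M: "Vector_Spaces.linear scale scale M"
    and span: "ssum U {..d} = UNIV"
    and comp: "\<And>i u. i \<le> d \<Longrightarrow> u \<in> U i \<Longrightarrow> T u = t i *s u \<and>
        (\<exists>u' t'. M u = m i *s u + u' \<and> T u' = t' *s u' \<and> \<alpha> * t' = \<beta> * t i)"
    and g: "\<And>i. i \<le> d \<Longrightarrow> (\<alpha> - \<beta>) * m i * t i = \<gamma>"
  shows "\<alpha> *s T (M v) - \<beta> *s M (T v) = \<gamma> *s v"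
proof -
  define F where "F v = \<alpha> *s T (M v) - \<beta> *s M (T v) - \<gamma> *s v" for v
  have Fadd: "F (x + y) = F x + F y" for x y
    by (simp add: F_def lin_add[OF T] lin_add[OF M] scale_right_distrib algebra_simps)
  have Fsc: "F (c *s x) = c *s F x" for c x
    by (simp add: F_def lin_scale[OF T] lin_scale[OF M] scale_right_diff_distrib mult.commute)
  have F0: "F 0 = 0" by (simp add: F_def lin_zero[OF T] lin_zero[OF M])
  have Fs: "subspace {x. F x = 0}"
    unfolding subspace_def using Fadd Fsc F0 by auto
  have "F u = 0" if i: "i \<le> d" and u: "u \<in> U i" for i u
  proof -
    obtain u' t' where Tu: "T u = t i *s u" and Mu: "M u = m i *s u + u'" and Tu': "T u' = t' *s u'"
      and tt: "\<alpha> * t' = \<beta> * t i" using comp[OF i u] by blast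
    have "F u = ((\<alpha> - \<beta>) * m i * t i - \<gamma>) *s u + (\<alpha> * t' - \<beta> * t i) *s u'"
      by (simp add: F_def Tu Mu Tu' lin_add[OF T] lin_scale[OF T] lin_scale[OF M]
          scale_right_distrib algebra_simps)
    also have "\<dots> = 0" using g[OF i] tt by simp
    finally show ?thesis .
  qed
  then have "v \<in> {x. F x = 0}"
    using ssum_in[OF Fs, of "{..d}" U v] span by auto
  then show ?thesis by (simp add: F_def)
qed

lemma decomp_indep:
  assumes dec: "decomposition scale U d" and jl: "j \<le> d" "l \<le> d" "j \<noteq> l"
    and x: "x \<in> U j" "x \<in> U l"
  shows "x = 0"
proof -
  have Us: "\<forall>i\<le>d. subspace (U i)" using dec unfolding decomposition_def by blast
  have ind: "\<forall>f. (\<forall>i\<le>d. f i \<in> U i) \<and> (\<Sum>i\<le>d. f i) = 0 \<longrightarrow> (\<forall>i\<le>d. f i = 0)"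
    using dec unfolding decomposition_def by blast
  define f where "f i = (if i = j then x else 0) + (if i = l then - x else 0)" for i
  have "\<forall>i\<le>d. f i \<in> U i"
    using Us x jl by (auto simp: f_def subspace_0 subspace_neg)
  moreover have "(\<Sum>i\<le>d. f i) = 0"
    using jl by (simp add: f_def sum.distrib sum.delta)
  ultimately have "f j = 0" using ind jl by blast
  then show ?thesis using jl by (simp add: f_def)
qed


lemma serre_subspace:
  assumes T: "Vector_Spaces.linear scale scale T" and M: "Vector_Spaces.linear scale scale M"
  shows "subspace {v. serre_op scale k T M v = 0}"
proof -
  have a: "serre_op scale k T M (x + y) = serre_op scale k T M x + serre_op scale k T M y" for x y
    by (simp add: serre_op_def lin_add[OF T] lin_add[OF M] scale_right_distrib algebra_simps)
  have b: "serre_op scale k T M (c *s x) = c *s serre_op scale k T M x" for c x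
    by (simp add: serre_op_def lin_scale[OF T] lin_scale[OF M] scale_right_diff_distrib
        scale_right_distrib mult.commute)
  have c: "serre_op scale k T M 0 = 0" by (simp add: serre_op_def lin_zero[OF T] lin_zero[OF M])
  show ?thesis unfolding subspace_def using a b c by auto
qed

lemma decomp_serre:
  fixes q :: 'a
  assumes T: "Vector_Spaces.linear scale scale T" and M: "Vector_Spaces.linear scale scale M"
    and q0: "q \<noteq> 0" and k: "k = q^2 + 1 + inverse q ^ 2"
    and dec: "decomposition scale U d"
    and UPQ: "\<And>j. j \<le> d \<Longrightarrow> U j = P j \<inter> Q j"
    and Pmono: "\<And>j l. j \<le> l \<Longrightarrow> P j \<subseteq> P l" and Qanti: "\<And>j l. j \<le> l \<Longrightarrow> Q l \<subseteq> Q j"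
    and Psub: "\<And>j. subspace (P j)" and Qsub: "\<And>j. subspace (Q j)"
    and Tt: "\<And>j u. j \<le> d \<Longrightarrow> u \<in> U j \<Longrightarrow> T u = t j *s u"
    and tinj: "inj_on t {..d}"
    and tstep: "\<And>j. j < d \<Longrightarrow> t (Suc j) = q^2 * t j \<or> t j = q^2 * t (Suc j)"
    and TP: "\<And>j x. x \<in> P j \<Longrightarrow> T x \<in> P j" and TQ: "\<And>j x. x \<in> Q j \<Longrightarrow> T x \<in> Q j"
    and MP: "\<And>i u. i < d \<Longrightarrow> u \<in> U i \<Longrightarrow> M u \<in> P (Suc i)"
    and MQ: "\<And>i u. 0 < i \<Longrightarrow> i \<le> d \<Longrightarrow> u \<in> U i \<Longrightarrow> M u \<in> Q (i - 1)"
  shows "serre_op scale k T M v = 0"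
proof -
  have Us: "\<forall>i\<le>d. subspace (U i)" and span: "ssum U {..d} = UNIV"
    using dec unfolding decomposition_def by blast+
  have "serre_op scale k T M u = 0" if i: "i \<le> d" and u: "u \<in> U i" for i u
  proof -
    have "M u \<in> ssum U {..d}" using span by simp
    then obtain w where Mu: "M u = (\<Sum>j\<le>d. w j)" and wU: "\<forall>j\<le>d. w j \<in> U j"
      unfolding ssum_iff by auto
    have Tw: "\<forall>j\<in>{..d}. T (w j) = t j *s w j" using Tt wU by auto
    have hi: "w j = 0" if j: "Suc i < j" "j \<le> d" for j
    proof -
      have "M u \<in> P (Suc i)" using MP[of i u] j u by simp
      then have "\<forall>j\<in>{..d}. w j \<in> P (Suc i)"
        using inv_comp[OF T Psub[of "Suc i"] TP[where j="Suc i"], of "{..d}" t w] tinj Tw Mu by simp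
      then have "w j \<in> P (Suc i)" using j by auto
      moreover have "Suc i \<le> j - 1" using j by simp
      ultimately have "w j \<in> P (j - 1)" using Pmono by blast
      moreover have "w j \<in> Q (j - 1)" using wU j UPQ[of j] Qanti[where j="j - 1" and l=j] by auto
      ultimately have "w j \<in> U (j - 1)" using UPQ[of "j - 1"] j by auto
      then show ?thesis using decomp_indep[OF dec, of j "j - 1"] wU j by auto
    qed
    have lo: "w j = 0" if j: "Suc j < i" for j
    proof -
      have "M u \<in> Q (i - 1)" using MQ[of i u] j u i by simp
      then have "\<forall>j\<in>{..d}. w j \<in> Q (i - 1)"
        using inv_comp[OF T Qsub[of "i - 1"] TQ[where j="i - 1"], of "{..d}" t w] tinj Tw Mu by simp
      then have "w j \<in> Q (i - 1)" using j i by auto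
      moreover have "Suc j \<le> i - 1" using j by simp
      ultimately have "w j \<in> Q (Suc j)" using Qanti by blast
      moreover have "w j \<in> P (Suc j)" using wU j i UPQ[of j] Pmono[of j "Suc j"] by auto
      ultimately have "w j \<in> U (Suc j)" using UPQ[of "Suc j"] j i by auto
      then show ?thesis using decomp_indep[OF dec, of j "Suc j"] wU j i by auto
    qed
    have cond: "\<forall>j\<in>{..d}. T (w j) = t j *s w j \<and>
        (w j = 0 \<or> t j = t i \<or> t j = q^2 * t i \<or> t i = q^2 * t j)"
    proof
      fix j assume j: "j \<in> {..d}"
      have "w j = 0 \<or> t j = t i \<or> t j = q^2 * t i \<or> t i = q^2 * t j"
      proof (cases "j = i")
        case False
        show ?thesis
        proof (cases "j = Suc i")
          case True
          then show ?thesis using tstep[of i] j by auto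
        next
          case F2: False
          show ?thesis
          proof (cases "Suc j = i")
            case True
            then show ?thesis using tstep[of j] i by auto
          next
            case False
            then show ?thesis using hi lo j F2 \<open>j \<noteq> i\<close> by (metis atMost_iff not_less_eq linorder_neqE_nat)
          qed
        qed
      qed simp
      then show "T (w j) = t j *s w j \<and> (w j = 0 \<or> t j = t i \<or> t j = q^2 * t i \<or> t i = q^2 * t j)"
        using Tw j by blast
    qed
    show ?thesis unfolding serre_op_def
      by (rule serre_core[OF T M q0 k Tt[OF i u] Mu cond])
  qed
  then show ?thesis
    using ssum_in[OF serre_subspace[OF T M, of k], of "{..d}" U v] span by auto
qed

lemma ord_serre:
  fixes q :: 'a
  assumes T: "Vector_Spaces.linear scale scale T" and M: "Vector_Spaces.linear scale scale M"
    and q0: "q \<noteq> 0" and k: "k = q^2 + 1 + inverse q ^ 2"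
    and diag: "diagonalizable scale T" and ord: "standard_ordering scale T M d th"
    and tstep: "\<And>j. j < d \<Longrightarrow> th (Suc j) = q^2 * th j \<or> th j = q^2 * th (Suc j)"
  shows "serre_op scale k T M v = 0"
proof -
  have "{v. \<exists>\<theta>. T v = \<theta> *s v} \<subseteq> {v. serre_op scale k T M v = 0}"
  proof
    fix v assume "v \<in> {v. \<exists>\<theta>. T v = \<theta> *s v}"
    then obtain \<theta> where Tv: "T v = \<theta> *s v" by blast
    show "v \<in> {v. serre_op scale k T M v = 0}"
    proof (cases "v = 0")
      case True
      then show ?thesis using subspace_0[OF serre_subspace[OF T M, of k]] by simp
    next
      case False
      then have "is_eigenvalue scale T \<theta>" using Tv unfolding is_eigenvalue_def by blast
      then obtain i where i: "i \<le> d" and thi: "\<theta> = th i"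
        using ord unfolding standard_ordering_def by blast
      have "M v \<in> ssum (\<lambda>j. eigenspace scale T (th j)) {j. j \<le> d \<and> i \<le> j + 1 \<and> j \<le> i + 1}"
        using ord i Tv thi unfolding standard_ordering_def eigenspace_def by blast
      then obtain f where Mv: "M v = (\<Sum>j\<in>{j. j \<le> d \<and> i \<le> j + 1 \<and> j \<le> i + 1}. f j)"
        and f: "\<forall>j\<in>{j. j \<le> d \<and> i \<le> j + 1 \<and> j \<le> i + 1}. f j \<in> eigenspace scale T (th j)"
        unfolding ssum_iff by blast
      have cond: "\<forall>j\<in>{j. j \<le> d \<and> i \<le> j + 1 \<and> j \<le> i + 1}. T (f j) = th j *s f j \<and>
          (f j = 0 \<or> th j = \<theta> \<or> th j = q^2 * \<theta> \<or> \<theta> = q^2 * th j)"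
      proof
        fix j assume j: "j \<in> {j. j \<le> d \<and> i \<le> j + 1 \<and> j \<le> i + 1}"
        have "j = i \<or> j = Suc i \<or> Suc j = i" using j by auto
        then have "th j = \<theta> \<or> th j = q^2 * \<theta> \<or> \<theta> = q^2 * th j"
          using tstep[of i] tstep[of j] j thi i by auto
        then show "T (f j) = th j *s f j \<and> (f j = 0 \<or> th j = \<theta> \<or> th j = q^2 * \<theta> \<or> \<theta> = q^2 * th j)"
          using f j unfolding eigenspace_def by blast
      qed
      show ?thesis unfolding serre_op_def mem_Collect_eq
        by (rule serre_core[OF T M q0 k Tv Mv cond])
    qed
  qed
  then have "span {v. \<exists>\<theta>. T v = \<theta> *s v} \<subseteq> {v. serre_op scale k T M v = 0}"
    by (rule span_minimal[OF _ serre_subspace[OF T M]])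
  then show ?thesis using diag unfolding diagonalizable_def by auto
qed


lemma shift_ssum:
  assumes T: "Vector_Spaces.linear scale scale T" and M: "Vector_Spaces.linear scale scale M"
    and rel: "\<forall>v. \<alpha> *s T (M v) - \<beta> *s M (T v) = \<gamma> *s v" and b0: "\<beta> \<noteq> 0"
    and ord: "standard_ordering scale M T' d th"
    and y: "y \<in> eigenspace scale M (th l)" and mu: "\<alpha> * th l = \<beta> * \<mu>'" "th l \<noteq> \<mu>'"
    and J: "finite J" "l \<in> J" and cond: "\<And>i. i \<le> d \<Longrightarrow> th i = \<mu>' \<Longrightarrow> i \<in> J"
  shows "T y \<in> ssum (\<lambda>j. eigenspace scale M (th j)) J"
proof -
  have Ms: "\<And>j. subspace (eigenspace scale M (th j))" using eig_subspace[OF M] by blast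
  have Sub: "subspace (ssum (\<lambda>j. eigenspace scale M (th j)) J)" by (rule ssum_subspace) (rule Ms)
  obtain x z where Ty: "T y = x + z" and x: "M x = \<mu>' *s x" and z: "M z = th l *s z"
    using shift[OF T M rel b0 mu] y unfolding eigenspace_def by blast
  have zin: "z \<in> ssum (\<lambda>j. eigenspace scale M (th j)) J"
    by (rule ssum_mem[OF J]) (use z in \<open>simp_all add: eigenspace_def lin_zero[OF M]\<close>)
  have xin: "x \<in> ssum (\<lambda>j. eigenspace scale M (th j)) J"
  proof (cases "x = 0")
    case True
    then show ?thesis using Sub subspace_0 by simp
  next
    case False
    then have "is_eigenvalue scale M \<mu>'" using x unfolding is_eigenvalue_def by blast
    then obtain i where i: "i \<le> d" "\<mu>' = th i" using ord_eig[OF ord] by blast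
    show ?thesis
      by (rule ssum_mem[OF J(1) cond[OF i(1)]]) (use x i in \<open>simp_all add: eigenspace_def lin_zero[OF M]\<close>)
  qed
  show ?thesis using Ty xin zin Sub subspace_add by simp
qed

lemma flag_map:
  assumes T: "Vector_Spaces.linear scale scale T" and M: "Vector_Spaces.linear scale scale M"
    and ord: "standard_ordering scale M T d th"
    and x: "x \<in> ssum (\<lambda>j. eigenspace scale M (th j)) I" and Id: "\<And>l. l \<in> I \<Longrightarrow> l \<le> d"
    and J: "finite J" and NJ: "\<And>l j. l \<in> I \<Longrightarrow> j \<le> d \<Longrightarrow> l \<le> j + 1 \<Longrightarrow> j \<le> l + 1 \<Longrightarrow> j \<in> J"
  shows "T x \<in> ssum (\<lambda>j. eigenspace scale M (th j)) J"
proof -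
  have Ms: "\<And>j. subspace (eigenspace scale M (th j))" using eig_subspace[OF M] by blast
  have Sub: "subspace (ssum (\<lambda>j. eigenspace scale M (th j)) J)" by (rule ssum_subspace) (rule Ms)
  show ?thesis
  proof (rule ssum_map[OF T Sub _ x])
    fix l y assume l: "l \<in> I" and y: "y \<in> eigenspace scale M (th l)"
    have Ty: "T y \<in> ssum (\<lambda>j. eigenspace scale M (th j)) {j. j \<le> d \<and> l \<le> j + 1 \<and> j \<le> l + 1}"
      by (rule ord_tri[OF ord Id[OF l] y])
    have sub: "{j. j \<le> d \<and> l \<le> j + 1 \<and> j \<le> l + 1} \<subseteq> J" using NJ[OF l] by auto
    have zs: "\<And>j. j \<in> J \<Longrightarrow> 0 \<in> eigenspace scale M (th j)" using Ms subspace_0 by blast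
    show "T y \<in> ssum (\<lambda>j. eigenspace scale M (th j)) J"
      by (rule ssum_mono[OF J sub zs Ty])
  qed
qed

end

lemma qeq:
  fixes q c :: "'a::field"
  assumes q0: "q \<noteq> 0" and qroot: "\<forall>n::nat. 0 < n \<longrightarrow> q ^ n \<noteq> 1" and c: "c \<noteq> 0"
    and h: "c * q powi k = c * q powi l"
  shows "k = l"
  using qpow_inj[OF q0 qroot] h c by simp

lemma qm2:
  fixes q :: "'a::field"
  assumes q0: "q \<noteq> 0"
  shows "q powi k = q^2 * q powi (k - 2)"
  using qpow_add2[OF q0, of "k - 2"] by simp

lemma stepUp:
  fixes q c :: "'a::field"
  assumes q0: "q \<noteq> 0"
  shows "c * q powi (2 * int (Suc j) - int d) = q^2 * (c * q powi (2 * int j - int d))"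
proof -
  have e: "2 * int (Suc j) - int d = (2 * int j - int d) + 2" by simp
  show ?thesis unfolding e qpow_add2[OF q0] by simp
qed

lemma stepDn:
  fixes q c :: "'a::field"
  assumes q0: "q \<noteq> 0"
  shows "c * q powi (int d - 2 * int j) = q^2 * (c * q powi (int d - 2 * int (Suc j)))"
proof -
  have e: "int d - 2 * int j = (int d - 2 * int (Suc j)) + 2" by simp
  show ?thesis unfolding e qpow_add2[OF q0] by simp
qed

lemma sc_up:
  fixes q c :: "'a::field"
  assumes q0: "q \<noteq> 0"
  shows "q * (c * q powi x) = inverse q * (c * q powi (x + 2))"
proof -
  have "q * (c * q powi x) = (inverse q * q) * (q * (c * q powi x))" using q0 by simp
  also have "\<dots> = inverse q * (c * q powi (x + 2))"
    by (simp add: qpow_add2[OF q0] power2_eq_square mult_ac)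
  finally show ?thesis .
qed

lemma sc_down:
  fixes q c :: "'a::field"
  assumes q0: "q \<noteq> 0"
  shows "inverse q * (c * q powi x) = q * (c * q powi (x - 2))"
proof -
  have e: "x - 2 + 2 = x" by simp
  show ?thesis using sc_up[OF q0, of c "x - 2"] unfolding e by (rule sym)
qed

lemma sc_ne:
  fixes q c :: "'a::field"
  assumes q0: "q \<noteq> 0" and qroot: "\<forall>n::nat. 0 < n \<longrightarrow> q ^ n \<noteq> 1" and c: "c \<noteq> 0" and xy: "x \<noteq> y"
  shows "c * q powi x \<noteq> c * q powi y"
  using qeq[OF q0 qroot c] xy by blast

lemma sc_prod:
  fixes q c e f :: "'a::field"
  assumes q0: "q \<noteq> 0" and xy: "x + y = 0"
  shows "c * (e * q powi x) * (f * q powi y) = c * e * f"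
proof -
  have "q powi x * q powi y = 1" using q0 xy by (simp flip: power_int_add)
  moreover have "c * (e * q powi x) * (f * q powi y) = c * e * f * (q powi x * q powi y)"
    by (simp only: mult_ac)
  ultimately show ?thesis by simp
qed

lemma ratio1:
  fixes q x y :: "'a::field"
  assumes q0: "q \<noteq> 0" and h: "y = q^2 * x"
  shows "inverse q * y = q * x"
proof -
  have "inverse q * y = (inverse q * q) * (q * x)" by (simp add: h power2_eq_square mult_ac)
  then show ?thesis using q0 by simp
qed

lemma ratio2:
  fixes q x y :: "'a::field"
  assumes q0: "q \<noteq> 0" and h: "x = q^2 * y"
  shows "q * y = inverse q * x"
  using ratio1[OF q0 h] by simp


theorem theorem12p1:
  fixes s :: "'a::field \<Rightarrow> 'v::ab_group_add \<Rightarrow> 'v"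
    and A As B Bs :: "'v \<Rightarrow> 'v"
    and q a as b bs :: 'a and d :: nat
  assumes K: "alg_closed TYPE('a)"
    and vs: "vector_space s"
    and fin: "\<exists>S. finite S \<and> module.span s S = UNIV"
    and nz: "(UNIV :: 'v set) \<noteq> {0}"
    and q0: "q \<noteq> 0" and qroot: "\<forall>n::nat. 0 < n \<longrightarrow> q ^ n \<noteq> 1"
    and TD: "tridiagonal_pair s A As"
    and ordA: "standard_ordering s A As d (\<lambda>i. a * q powi (2 * int i - int d))"
    and ordAs: "standard_ordering s As A d (\<lambda>i. as * q powi (int d - 2 * int i))"
    and a0: "a \<noteq> 0" and as0: "as \<noteq> 0" and b0: "b \<noteq> 0" and bs0: "bs \<noteq> 0"
    and dec1: "decomposition s (\<lambda>i.
        ssum (\<lambda>j. eigenspace s As (as * q powi (int d - 2 * int j))) {..i} \<inter>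
        ssum (\<lambda>j. eigenspace s A (a * q powi (2 * int j - int d))) {..d - i}) d"
    and dec2: "decomposition s (\<lambda>i.
        ssum (\<lambda>j. eigenspace s As (as * q powi (int d - 2 * int j))) {d - i..d} \<inter>
        ssum (\<lambda>j. eigenspace s A (a * q powi (2 * int j - int d))) {i..d}) d"
    and Blin: "Vector_Spaces.linear s s B"
    and Bdef: "\<forall>i\<le>d. \<forall>v \<in>
        ssum (\<lambda>j. eigenspace s As (as * q powi (int d - 2 * int j))) {..i} \<inter>
        ssum (\<lambda>j. eigenspace s A (a * q powi (2 * int j - int d))) {..d - i}.
          B v = s (b * q powi (2 * int i - int d)) v"
    and Bslin: "Vector_Spaces.linear s s Bs"
    and Bsdef: "\<forall>i\<le>d. \<forall>v \<in>
        ssum (\<lambda>j. eigenspace s As (as * q powi (int d - 2 * int j))) {d - i..d} \<inter>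
        ssum (\<lambda>j. eigenspace s A (a * q powi (2 * int j - int d))) {i..d}.
          Bs v = s (bs * q powi (int d - 2 * int i)) v"
  shows "(\<forall>v. A (A (A (As v))) - s (qint3 q) (A (A (As (A v))))
             + s (qint3 q) (A (As (A (A v)))) - As (A (A (A v))) = 0) \<and>
    (\<forall>v. As (As (As (A v))) - s (qint3 q) (As (As (A (As v))))
             + s (qint3 q) (As (A (As (As v)))) - A (As (As (As v))) = 0) \<and>
    (\<forall>v. B (B (B (Bs v))) - s (qint3 q) (B (B (Bs (B v))))
             + s (qint3 q) (B (Bs (B (B v)))) - Bs (B (B (B v))) = 0) \<and>
    (\<forall>v. Bs (Bs (Bs (B v))) - s (qint3 q) (Bs (Bs (B (Bs v))))
             + s (qint3 q) (Bs (B (Bs (Bs v)))) - B (Bs (Bs (Bs v))) = 0)"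
proof -
  interpret vector_space s by (rule vs)
  have Alin: "Vector_Spaces.linear s s A" using TD by (simp add: tridiagonal_pair_def)
  have Aslin: "Vector_Spaces.linear s s As" using TD by (simp add: tridiagonal_pair_def)
  have diagA: "diagonalizable s A" using TD by (simp add: tridiagonal_pair_def)
  have diagAs: "diagonalizable s As" using TD by (simp add: tridiagonal_pair_def)
  have q2: "q^2 \<noteq> 1" using qroot by (metis zero_less_numeral)
  have k: "qint3 q = q^2 + 1 + inverse q ^ 2" by (rule qint3_eq[OF q0 q2])
  have qi0: "inverse q \<noteq> 0" using q0 by simp
  let ?th = "\<lambda>j::nat. a * q powi (2 * int j - int d)"
  let ?et = "\<lambda>j::nat. as * q powi (int d - 2 * int j)"
  let ?E = "\<lambda>j::nat. eigenspace s A (a * q powi (2 * int j - int d))"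
  let ?Es = "\<lambda>j::nat. eigenspace s As (as * q powi (int d - 2 * int j))"
  let ?U1 = "\<lambda>i. ssum ?Es {..i} \<inter> ssum ?E {..d - i}"
  let ?U2 = "\<lambda>i. ssum ?Es {d - i..d} \<inter> ssum ?E {i..d}"
  let ?tB = "\<lambda>j::nat. b * q powi (2 * int j - int d)"
  let ?tBs = "\<lambda>j::nat. bs * q powi (int d - 2 * int j)"
  have Esub: "\<And>j. module.subspace s (?E j)" using eig_subspace[OF Alin] by blast
  have Essub: "\<And>j. module.subspace s (?Es j)" using eig_subspace[OF Aslin] by blast
  have E0: "\<And>j. 0 \<in> ?E j" using Esub subspace_0 by blast
  have Es0: "\<And>j. 0 \<in> ?Es j" using Essub subspace_0 by blast
  have ssE: "\<And>I. module.subspace s (ssum ?E I)" by (rule ssum_subspace) (rule Esub)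
  have ssEs: "\<And>I. module.subspace s (ssum ?Es I)" by (rule ssum_subspace) (rule Essub)
  have span1: "ssum ?U1 {..d} = UNIV" using dec1 unfolding decomposition_def by (elim conjE)
  have span2: "ssum ?U2 {..d} = UNIV" using dec2 unfolding decomposition_def by (elim conjE)
  have Bdef': "\<And>i v. i \<le> d \<Longrightarrow> v \<in> ?U1 i \<Longrightarrow> B v = s (?tB i) v" using Bdef by blast
  have Bsdef': "\<And>i v. i \<le> d \<Longrightarrow> v \<in> ?U2 i \<Longrightarrow> Bs v = s (?tBs i) v" using Bsdef by blast

  have P1: "serre_op s (qint3 q) A As v = 0" for v
    by (rule ord_serre[OF Alin Aslin q0 k diagA ordA]) (intro disjI1 stepUp[OF q0])
  have P2: "serre_op s (qint3 q) As A v = 0" for v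
    by (rule ord_serre[OF Aslin Alin q0 k diagAs ordAs]) (intro disjI2 stepDn[OF q0])

  have R1: "\<forall>v. s (inverse q) (B (A v)) - s q (A (B v)) = s ((inverse q - q) * a * b) v"
  proof
    fix v
    show "s (inverse q) (B (A v)) - s q (A (B v)) = s ((inverse q - q) * a * b) v"
    proof (rule rel_from_decomp[OF Blin Alin span1, where t = ?tB and m = "\<lambda>i. ?th (d - i)"])
      fix i u assume i: "i \<le> d" and u: "u \<in> ?U1 i"
      have Bu: "B u = s (?tB i) u" using Bdef' i u by blast
      define u' where "u' = A u - s (?th (d - i)) u"
      have Au: "A u = s (?th (d - i)) u + u'" by (simp add: u'_def)
      have u'1: "u' \<in> ssum ?E ({..d - i} - {d - i})"
        unfolding u'_def by (rule tri_low[OF Alin, where th = ?th and I = "{..d - i}" and m = "d - i"]) (use u in auto)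
      show "B u = s (?tB i) u \<and> (\<exists>u' t'. A u = s (?th (d - i)) u + u' \<and> B u' = s t' u' \<and> inverse q * t' = q * ?tB i)"
      proof (cases "i < d")
        case True
        have e: "{..d - i} - {d - i} = {..d - Suc i}" using True by auto
        have u'E: "u' \<in> ssum ?E {..d - Suc i}" using u'1 unfolding e .
        have AuEs: "A u \<in> ssum ?Es {..Suc i}"
          by (rule flag_map[OF Alin Aslin ordAs, where I = "{..i}"]) (use u i in auto)
        have uEs: "s (?th (d - i)) u \<in> ssum ?Es {..Suc i}"
          using u ssum_mono[of "{..Suc i}" "{..i}" ?Es u] Es0 subspace_scale[OF ssEs] by auto
        have u'Es: "u' \<in> ssum ?Es {..Suc i}" unfolding u'_def by (rule subspace_diff[OF ssEs AuEs uEs])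
        have memU: "u' \<in> ?U1 (Suc i)" using u'E u'Es by simp
        have Bu': "B u' = s (?tB (Suc i)) u'" by (rule Bdef'[OF _ memU]) (use True in simp)
        have "inverse q * ?tB (Suc i) = q * ?tB i" by (rule ratio1[OF q0 stepUp[OF q0]])
        then show ?thesis using Bu Au Bu' by blast
      next
        case False
        then have e0: "{..d - i} - {d - i} = {}" using i by auto
        have u'0: "u' = 0" using u'1 unfolding e0 ssum_empty by simp
        have "inverse q * (q^2 * ?tB i) = q * ?tB i" by (rule ratio1[OF q0 refl])
        then show ?thesis using Bu Au u'0 lin_zero[OF Blin] by (intro conjI exI[of _ 0] exI[of _ "q^2 * ?tB i"]) auto
      qed
    next
      fix i assume i: "i \<le> d"
      show "(inverse q - q) * ?th (d - i) * ?tB i = (inverse q - q) * a * b"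
        by (rule sc_prod[OF q0]) (use i in \<open>simp add: of_nat_diff\<close>)
    qed
  qed

  have R2: "\<forall>v. s q (B (As v)) - s (inverse q) (As (B v)) = s ((q - inverse q) * as * b) v"
  proof
    fix v
    show "s q (B (As v)) - s (inverse q) (As (B v)) = s ((q - inverse q) * as * b) v"
    proof (rule rel_from_decomp[OF Blin Aslin span1, where t = ?tB and m = ?et])
      fix i u assume i: "i \<le> d" and u: "u \<in> ?U1 i"
      have Bu: "B u = s (?tB i) u" using Bdef' i u by blast
      define u' where "u' = As u - s (?et i) u"
      have Au: "As u = s (?et i) u + u'" by (simp add: u'_def)
      have u'1: "u' \<in> ssum ?Es ({..i} - {i})"
        unfolding u'_def by (rule tri_low[OF Aslin, where th = ?et and I = "{..i}" and m = i]) (use u in auto)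
      show "B u = s (?tB i) u \<and> (\<exists>u' t'. As u = s (?et i) u + u' \<and> B u' = s t' u' \<and> q * t' = inverse q * ?tB i)"
      proof (cases "0 < i")
        case True
        then obtain j where ij: "i = Suc j" by (cases i) auto
        have e: "{..i} - {i} = {..j}" using ij by auto
        have u'Es: "u' \<in> ssum ?Es {..j}" using u'1 unfolding e .
        have AuE: "As u \<in> ssum ?E {..d - j}"
          by (rule flag_map[OF Aslin Alin ordA, where I = "{..d - i}"]) (use u i ij in auto)
        have uE: "s (?et i) u \<in> ssum ?E {..d - j}"
          using u ssum_mono[of "{..d - j}" "{..d - i}" ?E u] E0 subspace_scale[OF ssE] ij by auto
        have u'E: "u' \<in> ssum ?E {..d - j}" unfolding u'_def by (rule subspace_diff[OF ssE AuE uE])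
        have memU: "u' \<in> ?U1 j" using u'E u'Es by simp
        have Bu': "B u' = s (?tB j) u'" by (rule Bdef'[OF _ memU]) (use i ij in simp)
        have "q * ?tB j = inverse q * ?tB i" unfolding ij by (rule ratio2[OF q0 stepUp[OF q0]])
        then show ?thesis using Bu Au Bu' by blast
      next
        case False
        then have e0: "{..i} - {i} = {}" by auto
        have u'0: "u' = 0" using u'1 unfolding e0 ssum_empty by simp
        have "q * (?tB i / q^2) = inverse q * ?tB i" by (rule ratio2[OF q0]) (use q0 in simp)
        then show ?thesis using Bu Au u'0 lin_zero[OF Blin] by (intro conjI exI[of _ 0] exI[of _ "?tB i / q^2"]) auto
      qed
    next
      fix i assume i: "i \<le> d"
      show "(q - inverse q) * ?et i * ?tB i = (q - inverse q) * as * b"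
        by (rule sc_prod[OF q0]) simp
    qed
  qed

  have R3: "\<forall>v. s (inverse q) (Bs (As v)) - s q (As (Bs v)) = s ((inverse q - q) * as * bs) v"
  proof
    fix v
    show "s (inverse q) (Bs (As v)) - s q (As (Bs v)) = s ((inverse q - q) * as * bs) v"
    proof (rule rel_from_decomp[OF Bslin Aslin span2, where t = ?tBs and m = "\<lambda>i. ?et (d - i)"])
      fix i u assume i: "i \<le> d" and u: "u \<in> ?U2 i"
      have Bu: "Bs u = s (?tBs i) u" using Bsdef' i u by blast
      define u' where "u' = As u - s (?et (d - i)) u"
      have Au: "As u = s (?et (d - i)) u + u'" by (simp add: u'_def)
      have u'1: "u' \<in> ssum ?Es ({d - i..d} - {d - i})"
        unfolding u'_def by (rule tri_low[OF Aslin, where th = ?et and I = "{d - i..d}" and m = "d - i"]) (use u in auto)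
      show "Bs u = s (?tBs i) u \<and> (\<exists>u' t'. As u = s (?et (d - i)) u + u' \<and> Bs u' = s t' u' \<and> inverse q * t' = q * ?tBs i)"
      proof (cases "0 < i")
        case True
        then obtain j where ij: "i = Suc j" by (cases i) auto
        have e: "{d - i..d} - {d - i} = {d - j..d}" using ij i by auto
        have u'Es: "u' \<in> ssum ?Es {d - j..d}" using u'1 unfolding e .
        have AuE: "As u \<in> ssum ?E {j..d}"
          by (rule flag_map[OF Aslin Alin ordA, where I = "{i..d}"]) (use u i ij in auto)
        have uE: "s (?et (d - i)) u \<in> ssum ?E {j..d}"
          using u ssum_mono[of "{j..d}" "{i..d}" ?E u] E0 subspace_scale[OF ssE] ij by auto
        have u'E: "u' \<in> ssum ?E {j..d}" unfolding u'_def by (rule subspace_diff[OF ssE AuE uE])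
        have memU: "u' \<in> ?U2 j" using u'E u'Es by simp
        have Bu': "Bs u' = s (?tBs j) u'" by (rule Bsdef'[OF _ memU]) (use i ij in simp)
        have "inverse q * ?tBs j = q * ?tBs i" unfolding ij by (rule ratio1[OF q0 stepDn[OF q0]])
        then show ?thesis using Bu Au Bu' by blast
      next
        case False
        then have e0: "{d - i..d} - {d - i} = {}" by auto
        have u'0: "u' = 0" using u'1 unfolding e0 ssum_empty by simp
        have "inverse q * (q^2 * ?tBs i) = q * ?tBs i" by (rule ratio1[OF q0 refl])
        then show ?thesis using Bu Au u'0 lin_zero[OF Bslin] by (intro conjI exI[of _ 0] exI[of _ "q^2 * ?tBs i"]) auto
      qed
    next
      fix i assume i: "i \<le> d"
      show "(inverse q - q) * ?et (d - i) * ?tBs i = (inverse q - q) * as * bs"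
        by (rule sc_prod[OF q0]) (use i in \<open>simp add: of_nat_diff\<close>)
    qed
  qed

  have R4: "\<forall>v. s q (Bs (A v)) - s (inverse q) (A (Bs v)) = s ((q - inverse q) * a * bs) v"
  proof
    fix v
    show "s q (Bs (A v)) - s (inverse q) (A (Bs v)) = s ((q - inverse q) * a * bs) v"
    proof (rule rel_from_decomp[OF Bslin Alin span2, where t = ?tBs and m = ?th])
      fix i u assume i: "i \<le> d" and u: "u \<in> ?U2 i"
      have Bu: "Bs u = s (?tBs i) u" using Bsdef' i u by blast
      define u' where "u' = A u - s (?th i) u"
      have Au: "A u = s (?th i) u + u'" by (simp add: u'_def)
      have u'1: "u' \<in> ssum ?E ({i..d} - {i})"
        unfolding u'_def by (rule tri_low[OF Alin, where th = ?th and I = "{i..d}" and m = i]) (use u i in auto)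
      show "Bs u = s (?tBs i) u \<and> (\<exists>u' t'. A u = s (?th i) u + u' \<and> Bs u' = s t' u' \<and> q * t' = inverse q * ?tBs i)"
      proof (cases "i < d")
        case True
        have e: "{i..d} - {i} = {Suc i..d}" by auto
        have u'E: "u' \<in> ssum ?E {Suc i..d}" using u'1 unfolding e .
        have AuEs: "A u \<in> ssum ?Es {d - Suc i..d}"
          by (rule flag_map[OF Alin Aslin ordAs, where I = "{d - i..d}"]) (use u i in auto)
        have uEs: "s (?th i) u \<in> ssum ?Es {d - Suc i..d}"
          using u ssum_mono[of "{d - Suc i..d}" "{d - i..d}" ?Es u] Es0 subspace_scale[OF ssEs] by auto
        have u'Es: "u' \<in> ssum ?Es {d - Suc i..d}" unfolding u'_def by (rule subspace_diff[OF ssEs AuEs uEs])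
        have memU: "u' \<in> ?U2 (Suc i)" using u'E u'Es by simp
        have Bu': "Bs u' = s (?tBs (Suc i)) u'" by (rule Bsdef'[OF _ memU]) (use True in simp)
        have "q * ?tBs (Suc i) = inverse q * ?tBs i" by (rule ratio2[OF q0 stepDn[OF q0]])
        then show ?thesis using Bu Au Bu' by blast
      next
        case False
        then have e0: "{i..d} - {i} = {}" using i by auto
        have u'0: "u' = 0" using u'1 unfolding e0 ssum_empty by simp
        have "q * (?tBs i / q^2) = inverse q * ?tBs i" by (rule ratio2[OF q0]) (use q0 in simp)
        then show ?thesis using Bu Au u'0 lin_zero[OF Bslin] by (intro conjI exI[of _ 0] exI[of _ "?tBs i / q^2"]) auto
      qed
    next
      fix i assume i: "i \<le> d"
      show "(q - inverse q) * ?th i * ?tBs i = (q - inverse q) * a * bs"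
        by (rule sc_prod[OF q0]) simp
    qed
  qed

  have sB_E: "B y \<in> ssum ?E J" if y: "y \<in> ?E l" and J: "finite J" "l \<in> J" and Jl: "0 < l \<Longrightarrow> l - 1 \<in> J" for y l J
  proof (rule shift_ssum[OF Blin Alin R1 q0 ordA y, where \<mu>' = "a * q powi (2 * int l - int d - 2)"])
    show "inverse q * ?th l = q * (a * q powi (2 * int l - int d - 2))" by (rule sc_down[OF q0])
    show "?th l \<noteq> a * q powi (2 * int l - int d - 2)" by (rule sc_ne[OF q0 qroot a0]) simp
    fix i assume i: "i \<le> d" and h: "?th i = a * q powi (2 * int l - int d - 2)"
    have "2 * int i - int d = 2 * int l - int d - 2" by (rule qeq[OF q0 qroot a0 h])
    then have "l = Suc i" by simp
    then show "i \<in> J" using Jl by simp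
  qed (use J in auto)
  have sB_Es: "B y \<in> ssum ?Es J" if y: "y \<in> ?Es l" and J: "finite J" "l \<in> J" and Jl: "0 < l \<Longrightarrow> l - 1 \<in> J" for y l J
  proof (rule shift_ssum[OF Blin Aslin R2 qi0 ordAs y, where \<mu>' = "as * q powi (int d - 2 * int l + 2)"])
    show "q * ?et l = inverse q * (as * q powi (int d - 2 * int l + 2))" by (rule sc_up[OF q0])
    show "?et l \<noteq> as * q powi (int d - 2 * int l + 2)" by (rule sc_ne[OF q0 qroot as0]) simp
    fix i assume i: "i \<le> d" and h: "?et i = as * q powi (int d - 2 * int l + 2)"
    have "int d - 2 * int i = int d - 2 * int l + 2" by (rule qeq[OF q0 qroot as0 h])
    then have "l = Suc i" by simp
    then show "i \<in> J" using Jl by simp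
  qed (use J in auto)
  have sBs_Es: "Bs y \<in> ssum ?Es J" if y: "y \<in> ?Es l" and J: "finite J" "l \<in> J" and Jl: "l < d \<Longrightarrow> Suc l \<in> J" for y l J
  proof (rule shift_ssum[OF Bslin Aslin R3 q0 ordAs y, where \<mu>' = "as * q powi (int d - 2 * int l - 2)"])
    show "inverse q * ?et l = q * (as * q powi (int d - 2 * int l - 2))" by (rule sc_down[OF q0])
    show "?et l \<noteq> as * q powi (int d - 2 * int l - 2)" by (rule sc_ne[OF q0 qroot as0]) simp
    fix i assume i: "i \<le> d" and h: "?et i = as * q powi (int d - 2 * int l - 2)"
    have "int d - 2 * int i = int d - 2 * int l - 2" by (rule qeq[OF q0 qroot as0 h])
    then have "i = Suc l" by simp
    then show "i \<in> J" using Jl i by simp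
  qed (use J in auto)
  have sBs_E: "Bs y \<in> ssum ?E J" if y: "y \<in> ?E l" and J: "finite J" "l \<in> J" and Jl: "l < d \<Longrightarrow> Suc l \<in> J" for y l J
  proof (rule shift_ssum[OF Bslin Alin R4 qi0 ordA y, where \<mu>' = "a * q powi (2 * int l - int d + 2)"])
    show "q * ?th l = inverse q * (a * q powi (2 * int l - int d + 2))" by (rule sc_up[OF q0])
    show "?th l \<noteq> a * q powi (2 * int l - int d + 2)" by (rule sc_ne[OF q0 qroot a0]) simp
    fix i assume i: "i \<le> d" and h: "?th i = a * q powi (2 * int l - int d + 2)"
    have "2 * int i - int d = 2 * int l - int d + 2" by (rule qeq[OF q0 qroot a0 h])
    then have "i = Suc l" by simp
    then show "i \<in> J" using Jl i by simp
  qed (use J in auto)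

  have P3: "serre_op s (qint3 q) B Bs v = 0" for v
  proof (rule decomp_serre[OF Blin Bslin q0 k dec1, where P = "\<lambda>j. ssum ?Es {..j}" and Q = "\<lambda>j. ssum ?E {..d - j}" and t = ?tB])
    show "\<And>j l. j \<le> l \<Longrightarrow> ssum ?Es {..j} \<subseteq> ssum ?Es {..l}"
    proof
      fix j l x assume jl: "j \<le> l" and x: "x \<in> ssum ?Es {..j}"
      show "x \<in> ssum ?Es {..l}" by (rule ssum_mono[OF _ _ _ x]) (use jl Es0 in auto)
    qed
    show "\<And>j l. j \<le> l \<Longrightarrow> ssum ?E {..d - l} \<subseteq> ssum ?E {..d - j}"
    proof
      fix j l x assume jl: "j \<le> l" and x: "x \<in> ssum ?E {..d - l}"
      show "x \<in> ssum ?E {..d - j}" by (rule ssum_mono[OF _ _ _ x]) (use jl E0 in auto)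
    qed
    show "\<And>j u. j \<le> d \<Longrightarrow> u \<in> ?U1 j \<Longrightarrow> B u = s (?tB j) u" by (rule Bdef')
    show "inj_on ?tB {..d}"
    proof (rule inj_onI)
      fix x y assume "x \<in> {..d}" "y \<in> {..d}" and h: "?tB x = ?tB y"
      have "2 * int x - int d = 2 * int y - int d" by (rule qeq[OF q0 qroot b0 h])
      then show "x = y" by simp
    qed
    show "\<And>j. j < d \<Longrightarrow> ?tB (Suc j) = q^2 * ?tB j \<or> ?tB j = q^2 * ?tB (Suc j)"
      by (intro disjI1 stepUp[OF q0])
    show "B x \<in> ssum ?Es {..j}" if x: "x \<in> ssum ?Es {..j}" for j x
    proof (rule ssum_map[OF Blin ssEs, where W = ?Es and I = "{..j}"])
      fix l y assume "l \<in> {..j}" "y \<in> ?Es l"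
      then show "B y \<in> ssum ?Es {..j}" by (intro sB_Es) auto
    qed (rule x)
    show "B x \<in> ssum ?E {..d - j}" if x: "x \<in> ssum ?E {..d - j}" for j x
    proof (rule ssum_map[OF Blin ssE, where W = ?E and I = "{..d - j}"])
      fix l y assume "l \<in> {..d - j}" "y \<in> ?E l"
      then show "B y \<in> ssum ?E {..d - j}" by (intro sB_E) auto
    qed (rule x)
    show "Bs u \<in> ssum ?Es {..Suc i}" if i: "i < d" and u: "u \<in> ?U1 i" for i u
    proof (rule ssum_map[OF Bslin ssEs, where W = ?Es and I = "{..i}"])
      fix l y assume "l \<in> {..i}" "y \<in> ?Es l"
      then show "Bs y \<in> ssum ?Es {..Suc i}" by (intro sBs_Es) auto
    qed (use u in simp)
    show "Bs u \<in> ssum ?E {..d - (i - 1)}" if i: "0 < i" "i \<le> d" and u: "u \<in> ?U1 i" for i u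
    proof (rule ssum_map[OF Bslin ssE, where W = ?E and I = "{..d - i}"])
      fix l y assume "l \<in> {..d - i}" "y \<in> ?E l"
      then show "Bs y \<in> ssum ?E {..d - (i - 1)}" using i by (intro sBs_E) auto
    qed (use u in simp)
  qed (simp_all add: ssEs ssE)

  have P4: "serre_op s (qint3 q) Bs B v = 0" for v
  proof (rule decomp_serre[OF Bslin Blin q0 k dec2, where P = "\<lambda>j. ssum ?Es {d - j..d}" and Q = "\<lambda>j. ssum ?E {j..d}" and t = ?tBs])
    show "\<And>j l. j \<le> l \<Longrightarrow> ssum ?Es {d - j..d} \<subseteq> ssum ?Es {d - l..d}"
    proof
      fix j l x assume jl: "j \<le> l" and x: "x \<in> ssum ?Es {d - j..d}"
      show "x \<in> ssum ?Es {d - l..d}" by (rule ssum_mono[OF _ _ _ x]) (use jl Es0 in auto)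
    qed
    show "\<And>j l. j \<le> l \<Longrightarrow> ssum ?E {l..d} \<subseteq> ssum ?E {j..d}"
    proof
      fix j l x assume jl: "j \<le> l" and x: "x \<in> ssum ?E {l..d}"
      show "x \<in> ssum ?E {j..d}" by (rule ssum_mono[OF _ _ _ x]) (use jl E0 in auto)
    qed
    show "\<And>j u. j \<le> d \<Longrightarrow> u \<in> ?U2 j \<Longrightarrow> Bs u = s (?tBs j) u" by (rule Bsdef')
    show "inj_on ?tBs {..d}"
    proof (rule inj_onI)
      fix x y assume "x \<in> {..d}" "y \<in> {..d}" and h: "?tBs x = ?tBs y"
      have "int d - 2 * int x = int d - 2 * int y" by (rule qeq[OF q0 qroot bs0 h])
      then show "x = y" by simp
    qed
    show "\<And>j. j < d \<Longrightarrow> ?tBs (Suc j) = q^2 * ?tBs j \<or> ?tBs j = q^2 * ?tBs (Suc j)"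
      by (intro disjI2 stepDn[OF q0])
    show "Bs x \<in> ssum ?Es {d - j..d}" if x: "x \<in> ssum ?Es {d - j..d}" for j x
    proof (rule ssum_map[OF Bslin ssEs, where W = ?Es and I = "{d - j..d}"])
      fix l y assume "l \<in> {d - j..d}" "y \<in> ?Es l"
      then show "Bs y \<in> ssum ?Es {d - j..d}" by (intro sBs_Es) auto
    qed (rule x)
    show "Bs x \<in> ssum ?E {j..d}" if x: "x \<in> ssum ?E {j..d}" for j x
    proof (rule ssum_map[OF Bslin ssE, where W = ?E and I = "{j..d}"])
      fix l y assume "l \<in> {j..d}" "y \<in> ?E l"
      then show "Bs y \<in> ssum ?E {j..d}" by (intro sBs_E) auto
    qed (rule x)
    show "B u \<in> ssum ?Es {d - Suc i..d}" if i: "i < d" and u: "u \<in> ?U2 i" for i u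
    proof (rule ssum_map[OF Blin ssEs, where W = ?Es and I = "{d - i..d}"])
      fix l y assume "l \<in> {d - i..d}" "y \<in> ?Es l"
      then show "B y \<in> ssum ?Es {d - Suc i..d}" using i by (intro sB_Es) auto
    qed (use u in simp)
    show "B u \<in> ssum ?E {i - 1..d}" if i: "0 < i" "i \<le> d" and u: "u \<in> ?U2 i" for i u
    proof (rule ssum_map[OF Blin ssE, where W = ?E and I = "{i..d}"])
      fix l y assume "l \<in> {i..d}" "y \<in> ?E l"
      then show "B y \<in> ssum ?E {i - 1..d}" using i by (intro sB_E) auto
    qed (use u in simp)
  qed (simp_all add: ssEs ssE)

  show ?thesis using P1 P2 P3 P4 unfolding serre_op_def by blast
qed

end
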